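(* Let $H=(W,F)$ be a graph, $xy$ a flat edge of $H$, and $B=(X,Y;E_{XY})$ a cobipartite graph disjoint from $H$ with $E_{XY}\neq\varnothing$. Let $G$ be the graph obtained by the augmentation of the edge $xy$ in $H$ using $B$, and let $D=(V,A)$ be a clique-acyclic orientation of $G$. Let $s_X,s_Y$ be the sinks of $D[X]$ and $D[Y]$ respectively, labelled so that $(s_X,s_Y)\notin A$. Let $U=Y\setminus N_G(s_X)$, let $S_U=\varnothing$ if $U=\varnothing$ and $S_U=\{s_U\}$ where $s_U$ is the sink of $D[U]$ otherwise, and let $Z=(V\setminus(X\cup Y))\cup\{s_X,s_Y\}\cup S_U$. Then every kernel of $D[Z]$ is a kernel of $D$.
   Context: An edge of an undirected graph is flat if it is contained in no triangle. A cobipartite graph $B=(X,Y;E_{XY})$ has vertex set partitioned into two cliques $X$ and $Y$, with $E_{XY}$ the set of edges between $X$ and $Y$. The augmentation of a flat edge $xy$ in $H$ using $B$ builds a graph from $H$ and $B$ by removing $x$, $y$ (and the edge $xy$) from $H$, and adding all edges between $X$ and $N_H(x)\setminus\{y\}$ and all edges between $Y$ and $N_H(y)\setminus\{x\}$. An orientation orients each edge in exactly one direction; it is clique-acyclic if every clique has a sink, i.e. a vertex receiving an arc from every other vertex of the clique. For a digraph $D=(V,A)$, a set $S$ is stable if no two vertices of $S$ are adjacent, absorbing if every $u\in V\setminus S$ has some $v\in S$ with $(u,v)\in A$; a kernel is a stable absorbing set. *)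

theory Defs
  imports Main
begin

definition graph :: "'a set \<Rightarrow> ('a \<times> 'a) set \<Rightarrow> bool" where
  "graph V E \<longleftrightarrow> E \<subseteq> V \<times> V \<and> sym E \<and> (\<forall>v. (v, v) \<notin> E)"

definition nbhd :: "('a \<times> 'a) set \<Rightarrow> 'a \<Rightarrow> 'a set" where
  "nbhd E v = {u. (v, u) \<in> E}"

definition flat_edge :: "('a \<times> 'a) set \<Rightarrow> 'a \<Rightarrow> 'a \<Rightarrow> bool" where
  "flat_edge E x y \<longleftrightarrow> (x, y) \<in> E \<and> \<not> (\<exists>z. (x, z) \<in> E \<and> (y, z) \<in> E)"

definition clique :: "('a \<times> 'a) set \<Rightarrow> 'a set \<Rightarrow> bool" where
  "clique E K \<longleftrightarrow> (\<forall>u\<in>K. \<forall>v\<in>K. u \<noteq> v \<longrightarrow> (u, v) \<in> E)"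

text \<open>Cobipartite graph B = (X, Y; E_XY): X, Y disjoint cliques, E_XY the edges between them
  (stored as pairs in X x Y).\<close>
definition cobipartite :: "'a set \<Rightarrow> 'a set \<Rightarrow> ('a \<times> 'a) set \<Rightarrow> bool" where
  "cobipartite X Y EXY \<longleftrightarrow> X \<inter> Y = {} \<and> EXY \<subseteq> X \<times> Y"

definition cobip_edges :: "'a set \<Rightarrow> 'a set \<Rightarrow> ('a \<times> 'a) set \<Rightarrow> ('a \<times> 'a) set" where
  "cobip_edges X Y EXY =
     {(u, v). u \<in> X \<and> v \<in> X \<and> u \<noteq> v} \<union> {(u, v). u \<in> Y \<and> v \<in> Y \<and> u \<noteq> v}
     \<union> EXY \<union> EXY\<inverse>"

definition aug_V :: "'a set \<Rightarrow> 'a \<Rightarrow> 'a \<Rightarrow> 'a set \<Rightarrow> 'a set \<Rightarrow> 'a set" where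
  "aug_V W x y X Y = (W - {x, y}) \<union> X \<union> Y"

definition aug_E :: "('a \<times> 'a) set \<Rightarrow> 'a \<Rightarrow> 'a \<Rightarrow> 'a set \<Rightarrow> 'a set \<Rightarrow> ('a \<times> 'a) set
    \<Rightarrow> ('a \<times> 'a) set" where
  "aug_E F x y X Y EXY =
     {(u, v). (u, v) \<in> F \<and> u \<notin> {x, y} \<and> v \<notin> {x, y}}
     \<union> cobip_edges X Y EXY
     \<union> (X \<times> (nbhd F x - {y})) \<union> (X \<times> (nbhd F x - {y}))\<inverse>
     \<union> (Y \<times> (nbhd F y - {x})) \<union> (Y \<times> (nbhd F y - {x}))\<inverse>"

definition orientation :: "('a \<times> 'a) set \<Rightarrow> ('a \<times> 'a) set \<Rightarrow> bool" where
  "orientation E A \<longleftrightarrow> A \<subseteq> E \<and> (\<forall>(u, v) \<in> E. (u, v) \<in> A \<longleftrightarrow> (v, u) \<notin> A)"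

definition is_sink :: "('a \<times> 'a) set \<Rightarrow> 'a set \<Rightarrow> 'a \<Rightarrow> bool" where
  "is_sink A K s \<longleftrightarrow> s \<in> K \<and> (\<forall>u \<in> K - {s}. (u, s) \<in> A)"

definition clique_acyclic :: "'a set \<Rightarrow> ('a \<times> 'a) set \<Rightarrow> ('a \<times> 'a) set \<Rightarrow> bool" where
  "clique_acyclic V E A \<longleftrightarrow>
     (\<forall>K. K \<subseteq> V \<and> K \<noteq> {} \<and> clique E K \<longrightarrow> (\<exists>s. is_sink A K s))"

definition induced_arcs :: "('a \<times> 'a) set \<Rightarrow> 'a set \<Rightarrow> ('a \<times> 'a) set" where
  "induced_arcs A Z = A \<inter> (Z \<times> Z)"

definition stable :: "('a \<times> 'a) set \<Rightarrow> 'a set \<Rightarrow> bool" where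
  "stable A S \<longleftrightarrow> (\<forall>u\<in>S. \<forall>v\<in>S. (u, v) \<notin> A)"

definition absorbing :: "'a set \<Rightarrow> ('a \<times> 'a) set \<Rightarrow> 'a set \<Rightarrow> bool" where
  "absorbing V A S \<longleftrightarrow> (\<forall>u \<in> V - S. \<exists>v \<in> S. (u, v) \<in> A)"

definition kernel :: "'a set \<Rightarrow> ('a \<times> 'a) set \<Rightarrow> 'a set \<Rightarrow> bool" where
  "kernel V A S \<longleftrightarrow> S \<subseteq> V \<and> stable A S \<and> absorbing V A S"

end

theory Submission
  imports Defs
begin

lemma tri:
  assumes o: "orientation E A" and ca: "clique_acyclic V E A" and s: "sym E"
    and EV: "E \<subseteq> V \<times> V"
    and ab: "(a,b)\<in>A" and bc: "(b,c)\<in>A" and ac: "(a,c)\<in>E"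
  shows "(a,c)\<in>A"
proof -
  have AE: "A \<subseteq> E" and tot: "\<And>u v. (u,v)\<in>E \<Longrightarrow> (u,v)\<in>A \<longleftrightarrow> (v,u)\<notin>A"
    using o unfolding orientation_def by auto
  have abE: "(a,b)\<in>E" "(b,c)\<in>E" using ab bc AE by auto
  have irr: "\<And>u. (u,u)\<notin>A" using tot AE by blast
  have d: "a\<noteq>b" "b\<noteq>c" using ab bc irr by auto
  have "a \<noteq> c" using ab bc tot abE by blast
  have cl: "clique E {a,b,c}" using abE ac s unfolding clique_def sym_def by auto
  have "{a,b,c} \<subseteq> V" using EV abE by auto
  then obtain t where t: "is_sink A {a,b,c} t" using ca cl unfolding clique_acyclic_def by blast
  show ?thesis
  proof -
    have "t = a \<or> t = b \<or> t = c" using t unfolding is_sink_def by auto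
    moreover have "t \<noteq> a" using t d ab tot abE unfolding is_sink_def by auto
    moreover have "t \<noteq> b" using t d bc tot abE unfolding is_sink_def by auto
    ultimately show ?thesis using t \<open>a\<noteq>c\<close> unfolding is_sink_def by auto
  qed
qed

theorem lemma3:
  fixes W X Y :: "'a set" and F EXY A :: "('a \<times> 'a) set" and x y sX sY sU :: 'a
    and V U SU Z :: "'a set" and E :: "('a \<times> 'a) set"
  assumes H: "finite W" "graph W F"
    and flat: "flat_edge F x y"
    and B: "finite X" "finite Y" "cobipartite X Y EXY"
    and disj: "(X \<union> Y) \<inter> W = {}"
    and nonempty: "EXY \<noteq> {}"
    and G: "V = aug_V W x y X Y" "E = aug_E F x y X Y EXY"
    and D: "orientation E A" "clique_acyclic V E A"
    and sinks: "is_sink (induced_arcs A X) X sX" "is_sink (induced_arcs A Y) Y sY"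
    and label: "(sX, sY) \<notin> A"
    and U: "U = Y - nbhd E sX"
    and sU: "U \<noteq> {} \<Longrightarrow> is_sink (induced_arcs A U) U sU"
    and SU: "SU = (if U = {} then {} else {sU})"
    and Z: "Z = (V - (X \<union> Y)) \<union> {sX, sY} \<union> SU"
  shows "\<forall>S. kernel Z (induced_arcs A Z) S \<longrightarrow> kernel V A S"
proof (intro allI impI)
  fix S assume K: "kernel Z (induced_arcs A Z) S"
  have FW: "F \<subseteq> W \<times> W" and Fs: "sym F" and Firr: "\<And>v. (v,v)\<notin>F"
    using H(2) unfolding graph_def by auto
  have xy: "(x,y)\<in>F" and nt: "\<not>(\<exists>z. (x, z) \<in> F \<and> (y, z) \<in> F)"
    using flat unfolding flat_edge_def by auto
  have xW: "x \<in> W" "y \<in> W" using xy FW by auto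
  have XY: "X \<inter> Y = {}" "EXY \<subseteq> X \<times> Y" using B(3) unfolding cobipartite_def by auto
  have symE: "sym E" using Fs unfolding G(2) aug_E_def cobip_edges_def sym_def by blast
  have nbW: "\<And>z. nbhd F z \<subseteq> W" using FW unfolding nbhd_def by auto
  have EV: "E \<subseteq> V \<times> V"
  proof
    fix p assume "p \<in> E"
    then show "p \<in> V \<times> V" using FW XY nbW[of x] nbW[of y] Firr
      unfolding G aug_E_def aug_V_def cobip_edges_def nbhd_def by auto
  qed
  have AE: "A \<subseteq> E" and tot: "\<And>u v. (u,v)\<in>E \<Longrightarrow> (u,v)\<in>A \<longleftrightarrow> (v,u)\<notin>A"
    using D(1) unfolding orientation_def by auto
  have T: "\<And>a b c. (a,b)\<in>A \<Longrightarrow> (b,c)\<in>A \<Longrightarrow> (a,c)\<in>E \<Longrightarrow> (a,c)\<in>A"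
    using tri[OF D(1) D(2) symE EV] by blast
  have NX: "\<And>a w. w \<notin> X \<union> Y \<Longrightarrow> a \<in> X \<Longrightarrow> (a,w)\<in>E \<Longrightarrow> w \<in> nbhd F x - {y}"
    using XY disj xW FW unfolding G(2) aug_E_def cobip_edges_def by auto
  have NY: "\<And>a w. w \<notin> X \<union> Y \<Longrightarrow> a \<in> Y \<Longrightarrow> (a,w)\<in>E \<Longrightarrow> w \<in> nbhd F y - {x}"
    using XY disj xW FW unfolding G(2) aug_E_def cobip_edges_def by auto
  have allX: "\<And>u w. w \<in> nbhd F x - {y} \<Longrightarrow> u \<in> X \<Longrightarrow> (u,w)\<in>E"
    unfolding G(2) aug_E_def by auto
  have allY: "\<And>u w. w \<in> nbhd F y - {x} \<Longrightarrow> u \<in> Y \<Longrightarrow> (u,w)\<in>E"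
    unfolding G(2) aug_E_def by auto
  have fl: "\<And>u w. w \<notin> X \<union> Y \<Longrightarrow> w \<in> nbhd F x \<Longrightarrow> u \<in> Y \<Longrightarrow> (u,w)\<notin>E"
    using NY nt unfolding nbhd_def by blast
  have KX: "\<And>u. u \<in> X - {sX} \<Longrightarrow> (u,sX)\<in>A" "sX \<in> X"
    using sinks(1) unfolding is_sink_def induced_arcs_def by auto
  have KY: "\<And>u. u \<in> Y - {sY} \<Longrightarrow> (u,sY)\<in>A" "sY \<in> Y"
    using sinks(2) unfolding is_sink_def induced_arcs_def by auto
  have KU: "\<And>u. U \<noteq> {} \<Longrightarrow> u \<in> U - {sU} \<Longrightarrow> (u,sU)\<in>A" "U \<noteq> {} \<Longrightarrow> sU \<in> U"
    using sU unfolding is_sink_def induced_arcs_def by auto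
  have SZ: "S \<subseteq> Z" and stZ: "stable (induced_arcs A Z) S"
    and abZ: "\<And>z. z \<in> Z - S \<Longrightarrow> \<exists>v\<in>S. (z,v)\<in>A \<and> v \<in> Z"
    using K unfolding kernel_def absorbing_def induced_arcs_def by auto
  have ZV: "Z \<subseteq> V" using KX KY KU SU U unfolding Z G(1) aug_V_def by auto
  have st: "stable A S" using stZ SZ unfolding stable_def induced_arcs_def by blast
  have sXZ: "sX \<in> Z" "sY \<in> Z" unfolding Z by auto
  have sUZ: "U \<noteq> {} \<Longrightarrow> sU \<in> Z" unfolding Z SU by auto
  have sUn: "U \<noteq> {} \<Longrightarrow> (sX,sU) \<notin> E" using KU(2) U unfolding nbhd_def by auto
  have ab: "absorbing V A S"
    unfolding absorbing_def
  proof
    fix u assume u: "u \<in> V - S"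
    show "\<exists>v\<in>S. (u,v)\<in>A"
    proof (cases "u \<in> Z")
      case True then show ?thesis using abZ u by blast
    next
      case False
      then have uXY: "u \<in> X \<union> Y" and usX: "u \<noteq> sX" and usY: "u \<noteq> sY"
        and usU: "U \<noteq> {} \<Longrightarrow> u \<noteq> sU"
        using u unfolding Z SU by auto
      show ?thesis
      proof (cases "sX \<in> S")
        case sXS: True
        show ?thesis
        proof (cases "u \<in> X")
          case True then show ?thesis using KX usX sXS by blast
        next
          case False
          then have uY: "u \<in> Y" using uXY by auto
          show ?thesis
          proof (cases "(sX,u) \<in> E")
            case False
            then have uU: "u \<in> U" and Une: "U \<noteq> {}" using uY unfolding U nbhd_def by auto
            have usUA: "(u,sU)\<in>A" using KU Une uU usU by blast
            show ?thesis
            proof (cases "sU \<in> S")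
              case True then show ?thesis using usUA by blast
            next
              case False
              then obtain v where v: "v\<in>S" "(sU,v)\<in>A" "v\<in>Z" using abZ sUZ Une by blast
              have sUY: "sU \<in> Y" using KU(2) Une unfolding U by auto
              have "v \<noteq> sU" using v sU AE tot by blast
              have "v \<noteq> sX" using v sUn Une AE symE unfolding sym_def by blast
              then consider "v \<notin> X \<union> Y" | "v = sY" using v \<open>v \<noteq> sU\<close> unfolding Z SU by (auto split: if_splits)
              then show ?thesis
              proof cases
                case 1
                then have "(u,v)\<in>E" using NY allY sUY uY v AE by blast
                then show ?thesis using T usUA v by blast
              next
                case 2 then show ?thesis using KY uY usY v by blast
              qed
            qed
          next
            case True
            show ?thesis
            proof (cases "(u,sX)\<in>A")
              case True then show ?thesis using sXS by blast
            next
              case False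
              then have sXu: "(sX,u)\<in>A" using tot True by blast
              have usYA: "(u,sY)\<in>A" using KY uY usY by blast
              show ?thesis
              proof (cases "sY \<in> S")
                case True then show ?thesis using usYA by blast
              next
                case False
                then obtain v where v: "v\<in>S" "(sY,v)\<in>A" "v\<in>Z" using abZ sXZ by blast
                have "v \<noteq> sY" using v AE tot by blast
                have vU: "U \<noteq> {} \<Longrightarrow> v \<noteq> sU"
                proof
                  assume "U \<noteq> {}" "v = sU"
                  then have "sU \<noteq> sY" using \<open>v \<noteq> sY\<close> by simp
                  then have "(sU,sY)\<in>A" using KY KU(2) \<open>U \<noteq> {}\<close> unfolding U by blast
                  then show False using v \<open>v = sU\<close> AE tot by blast
                qed
                consider "v \<notin> X \<union> Y" | "v = sX" using v \<open>v \<noteq> sY\<close> vU unfolding Z SU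
                  by (auto split: if_splits)
                then show ?thesis
                proof cases
                  case 1
                  then have "(u,v)\<in>E" using NY allY KY(2) uY v AE by blast
                  then show ?thesis using T usYA v by blast
                next
                  case 2
                  have "(sX,sY)\<in>E" using v 2 AE symE unfolding sym_def by blast
                  then have "(sX,sY)\<in>A" using T sXu usYA by blast
                  then show ?thesis using label by blast
                qed
              qed
            qed
          qed
        qed
      next
        case sXnS: False
        then obtain v where v: "v\<in>S" "(sX,v)\<in>A" "v\<in>Z" using abZ sXZ by blast
        have "v \<noteq> sX" using v AE tot by blast
        have "v \<noteq> sY" using v label by blast
        have "U \<noteq> {} \<Longrightarrow> v \<noteq> sU" using v sUn AE by blast
        then have vn: "v \<notin> X \<union> Y" using v \<open>v \<noteq> sX\<close> \<open>v \<noteq> sY\<close> unfolding Z SU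
          by (auto split: if_splits)
        have vx: "v \<in> nbhd F x - {y}" using NX vn KX(2) v AE by blast
        show ?thesis
        proof (cases "u \<in> X")
          case True
          then have "(u,v)\<in>E" using allX vx by blast
          then show ?thesis using T KX usX True v by blast
        next
          case False
          then have uY: "u \<in> Y" using uXY by auto
          have usYA: "(u,sY)\<in>A" using KY uY usY by blast
          show ?thesis
          proof (cases "sY \<in> S")
            case True then show ?thesis using usYA by blast
          next
            case False
            then obtain w where w: "w\<in>S" "(sY,w)\<in>A" "w\<in>Z" using abZ sXZ by blast
            have "w \<noteq> sY" using w AE tot by blast
            have "w \<noteq> sX" using w sXnS by blast
            have wU: "U \<noteq> {} \<Longrightarrow> w \<noteq> sU"
            proof
              assume "U \<noteq> {}" "w = sU"
              then have "sU \<noteq> sY" using \<open>w \<noteq> sY\<close> by simp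
              then have "(sU,sY)\<in>A" using KY KU(2) \<open>U \<noteq> {}\<close> unfolding U by blast
              then show False using w \<open>w = sU\<close> AE tot by blast
            qed
            have wn: "w \<notin> X \<union> Y" using w \<open>w \<noteq> sX\<close> \<open>w \<noteq> sY\<close> wU unfolding Z SU
              by (auto split: if_splits)
            then have "(u,w)\<in>E" using NY allY KY(2) uY w AE by blast
            then show ?thesis using T usYA w by blast
          qed
        qed
      qed
    qed
  qed
  show "kernel V A S" unfolding kernel_def using SZ ZV st ab by blast
qed

end
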